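(* For each $t\ge 0$, the set of simplices of $\mathrm{VR}_t(\mathcal X,d_\theta)$ that meet both $\mathcal C$ and $\mathcal Y^\circ$ is exactly \[ \bigcup_{u,v\ge 0,\ \|(u,v)\|_{\ell^p}\le t}\Bigl(\mathrm{VR}_t(\mathcal C^{\le u})\star \mathrm{VR}_t(\mathcal Y^{\le v})\Bigr). \] In particular, when $p=\infty$, \[ \mathrm{VR}_t(\mathcal X,d_\theta)=\mathrm{VR}_t(\mathcal C,\beta)\cup \mathrm{VR}_t(\mathcal Y^\circ,d_{\mathrm{reg}})\cup\Bigl(\mathrm{VR}_t(\mathcal C^{\le t})\star \mathrm{VR}_t(\mathcal Y^{\le t})\Bigr). \]
   Context: Let $A$ be a unital $C^*$-algebra, $H$ a Hilbert space, $\mathcal X=\mathrm{CB}(A,B(H))$, $\mathcal C=\mathrm{CP}(A,B(H))$ with Bures distance $\beta$. Fix $\theta\in\mathcal C$, $\lambda>0$, $\alpha\in(0,1]$, $p\in[1,\infty]$, and let $d_\theta=\beta^{BK}_{\theta,\lambda,p,\alpha}$ be the Bures--Kuratowski metric. Let $\mathcal Y=(\mathcal X\setminus\mathcal C)\sqcup\{\ast\}$ with metric $d_{\mathrm{reg}}$ ($=\lambda\delta_{\mathrm{reg}}^\alpha$ on non-CP pairs and $\lambda\delta_{\mathrm{reg}}(\cdot,0)^\alpha$ to $\ast$, $\delta_{\mathrm{reg}}$ the regular-representation metric), $\mathcal Y^\circ=\mathcal Y\setminus\{\ast\}$. Then $d_\theta=\beta$ on $\mathcal C$, $d_\theta=d_{\mathrm{reg}}$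 on $\mathcal Y^\circ$, and $d_\theta(x,y)=\|(r_{\mathcal C}(x),r_{\mathcal Y}(y))\|_{\ell^p}$ for $x\in\mathcal C$, $y\in\mathcal Y$, with $r_{\mathcal C}(x)=\beta(x,\theta)$, $r_{\mathcal Y}(y)=d_{\mathrm{reg}}(y,\ast)$. $\mathrm{VR}_t(Z,d)$ is the Vietoris--Rips complex (finite subsets of diameter $\le t$). $\mathcal C^{\le u}=\{x\in\mathcal C: r_{\mathcal C}(x)\le u\}$, $\mathcal Y^{\le v}=\{y\in\mathcal Y^\circ: r_{\mathcal Y}(y)\le v\}$; $\mathrm{VR}_t(\mathcal C^{\le u})$ and $\mathrm{VR}_t(\mathcal Y^{\le v})$ are the induced subcomplexes of $\mathrm{VR}_t(\mathcal C,\beta)$ and $\mathrm{VR}_t(\mathcal Y^\circ,d_{\mathrm{reg}})$ on these vertex sets. For complexes $K,L$ on disjoint vertex sets, $K\star L=\{\sigma\cup\tau:\sigma\in K,\tau\in L,\sigma\ne\varnothing,\tau\neq\varnothing\}$. *)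

theory Defs
  imports "HOL-Analysis.Analysis" "HOL-Library.Extended_Real"
begin

text \<open>The ambient space X = CB(A,B(H)) is modelled by the universe
  of a type 'a; the CP cone is a subset C. The pointed space Y = (X - C) + {*} is modelled
  via 'a option with None = *, restricted to Some ` (- C) \<union> {None}.\<close>

definition metric_on :: "'b set \<Rightarrow> ('b \<Rightarrow> 'b \<Rightarrow> real) \<Rightarrow> bool" where
  "metric_on S d \<longleftrightarrow>
     (\<forall>x\<in>S. \<forall>y\<in>S. 0 \<le> d x y \<and> (d x y = 0 \<longleftrightarrow> x = y) \<and> d x y = d y x) \<and>
     (\<forall>x\<in>S. \<forall>y\<in>S. \<forall>z\<in>S. d x z \<le> d x y + d y z)"

definition lp_norm2 :: "ereal \<Rightarrow> real \<Rightarrow> real \<Rightarrow> real" where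
  "lp_norm2 p a b =
     (if p = \<infinity> then max \<bar>a\<bar> \<bar>b\<bar>
      else (\<bar>a\<bar> powr real_of_ereal p + \<bar>b\<bar> powr real_of_ereal p) powr (1 / real_of_ereal p))"

definition VR :: "real \<Rightarrow> 'b set \<Rightarrow> ('b \<Rightarrow> 'b \<Rightarrow> real) \<Rightarrow> 'b set set" where
  "VR t S d = {\<sigma>. finite \<sigma> \<and> \<sigma> \<noteq> {} \<and> \<sigma> \<subseteq> S \<and> (\<forall>x\<in>\<sigma>. \<forall>y\<in>\<sigma>. d x y \<le> t)}"

definition join :: "'b set set \<Rightarrow> 'b set set \<Rightarrow> 'b set set" where
  "join K L = {\<sigma> \<union> \<tau> | \<sigma> \<tau>. \<sigma> \<in> K \<and> \<tau> \<in> L \<and> \<sigma> \<noteq> {} \<and> \<tau> \<noteq> {}}"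

end

theory Submission
  imports Defs
begin

lemma lp_mono:
  assumes p: "1 \<le> p" and "\<bar>a\<bar> \<le> u" and "\<bar>b\<bar> \<le> v"
  shows "lp_norm2 p a b \<le> lp_norm2 p u v"
proof (cases "p = \<infinity>")
  case True
  then show ?thesis using assms by (auto simp: lp_norm2_def)
next
  case False
  then obtain r where r: "p = ereal r" using p by (cases p) auto
  with p have r1: "1 \<le> r" by auto
  have u: "0 \<le> u" "0 \<le> v" using assms by auto
  have "\<bar>a\<bar> powr r \<le> u powr r" using assms r1 by (intro powr_mono2) auto
  moreover have "\<bar>b\<bar> powr r \<le> v powr r" using assms r1 by (intro powr_mono2) auto
  ultimately have "\<bar>a\<bar> powr r + \<bar>b\<bar> powr r \<le> \<bar>u\<bar> powr r + \<bar>v\<bar> powr r" using u by simp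
  then have "(\<bar>a\<bar> powr r + \<bar>b\<bar> powr r) powr (1/r) \<le> (\<bar>u\<bar> powr r + \<bar>v\<bar> powr r) powr (1/r)"
    using r1 by (intro powr_mono2) auto
  then show ?thesis using r False by (simp add: lp_norm2_def)
qed

lemma VR_mono: "S \<subseteq> T \<Longrightarrow> VR t S d \<subseteq> VR t T d"
  unfolding VR_def by blast

lemma join_mono: "K \<subseteq> K' \<Longrightarrow> L \<subseteq> L' \<Longrightarrow> join K L \<subseteq> join K' L'"
  unfolding join_def by blast

lemma VR_sub: "\<sigma> \<in> VR t UNIV d \<Longrightarrow> \<sigma> \<subseteq> S \<Longrightarrow> (\<And>x y. x \<in> S \<Longrightarrow> y \<in> S \<Longrightarrow> d x y = e x y)
   \<Longrightarrow> \<sigma> \<in> VR t S e"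
proof -
  assume a: "\<sigma> \<in> VR t UNIV d" "\<sigma> \<subseteq> S" and e: "\<And>x y. x \<in> S \<Longrightarrow> y \<in> S \<Longrightarrow> d x y = e x y"
  have "\<forall>x\<in>\<sigma>. \<forall>y\<in>\<sigma>. e x y \<le> t"
  proof (intro ballI)
    fix x y assume "x \<in> \<sigma>" "y \<in> \<sigma>"
    then have "d x y \<le> t" "x \<in> S" "y \<in> S" using a unfolding VR_def by blast+
    then show "e x y \<le> t" using e by simp
  qed
  then show ?thesis using a unfolding VR_def by blast
qed

lemma VR_transfer: "\<sigma> \<in> VR t S d \<Longrightarrow> \<sigma> \<subseteq> T \<Longrightarrow> (\<And>x y. x \<in> \<sigma> \<Longrightarrow> y \<in> \<sigma> \<Longrightarrow> e x y = d x y)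
   \<Longrightarrow> \<sigma> \<in> VR t T e"
proof -
  assume a: "\<sigma> \<in> VR t S d" "\<sigma> \<subseteq> T" and e: "\<And>x y. x \<in> \<sigma> \<Longrightarrow> y \<in> \<sigma> \<Longrightarrow> e x y = d x y"
  have "\<forall>x\<in>\<sigma>. \<forall>y\<in>\<sigma>. e x y \<le> t"
  proof (intro ballI)
    fix x y assume "x \<in> \<sigma>" "y \<in> \<sigma>"
    then have "d x y \<le> t" "e x y = d x y" using a e unfolding VR_def by blast+
    then show "e x y \<le> t" by simp
  qed
  then show ?thesis using a unfolding VR_def by blast
qed

theorem theorem6p5:
  fixes C :: "'a set" and \<theta> :: 'a
    and \<beta> :: "'a \<Rightarrow> 'a \<Rightarrow> real"
    and dreg :: "'a option \<Rightarrow> 'a option \<Rightarrow> real"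
    and d\<theta> :: "'a \<Rightarrow> 'a \<Rightarrow> real"
    and p :: ereal and t :: real
  assumes p: "1 \<le> p"
    and \<theta>C: "\<theta> \<in> C"
    and \<beta>_metric: "metric_on C \<beta>"
    and dreg_metric: "metric_on (insert None (Some ` (- C))) dreg"
    and d\<theta>_metric: "metric_on UNIV d\<theta>"
    and d\<theta>_C: "\<And>x y. x \<in> C \<Longrightarrow> y \<in> C \<Longrightarrow> d\<theta> x y = \<beta> x y"
    and d\<theta>_Y: "\<And>x y. x \<notin> C \<Longrightarrow> y \<notin> C \<Longrightarrow> d\<theta> x y = dreg (Some x) (Some y)"
    and d\<theta>_cross: "\<And>x y. x \<in> C \<Longrightarrow> y \<notin> C \<Longrightarrow>
                     d\<theta> x y = lp_norm2 p (\<beta> x \<theta>) (dreg (Some y) None)"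
    and t: "0 \<le> t"
  shows "{\<sigma> \<in> VR t UNIV d\<theta>. \<sigma> \<inter> C \<noteq> {} \<and> \<sigma> - C \<noteq> {}} =
           (\<Union>{join (VR t {x \<in> C. \<beta> x \<theta> \<le> u} \<beta>)
                   (VR t {y \<in> - C. dreg (Some y) None \<le> v} (\<lambda>x y. dreg (Some x) (Some y)))
               | u v. 0 \<le> u \<and> 0 \<le> v \<and> lp_norm2 p u v \<le> t})
       \<and> (p = \<infinity> \<longrightarrow>
           VR t UNIV d\<theta> =
             VR t C \<beta> \<union> VR t (- C) (\<lambda>x y. dreg (Some x) (Some y)) \<union>
             join (VR t {x \<in> C. \<beta> x \<theta> \<le> t} \<beta>)
                  (VR t {y \<in> - C. dreg (Some y) None \<le> t} (\<lambda>x y. dreg (Some x) (Some y))))"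
proof -
  have bpos: "\<And>x. x \<in> C \<Longrightarrow> 0 \<le> \<beta> x \<theta>" using \<beta>_metric \<theta>C unfolding metric_on_def by blast
  have dpos: "\<And>y. y \<notin> C \<Longrightarrow> 0 \<le> dreg (Some y) None" using dreg_metric unfolding metric_on_def by blast
  have dsym: "\<And>x y. d\<theta> x y = d\<theta> y x" using d\<theta>_metric unfolding metric_on_def by blast
  define JJ where "JJ u v = join (VR t {x \<in> C. \<beta> x \<theta> \<le> u} \<beta>)
                   (VR t {y \<in> - C. dreg (Some y) None \<le> v} (\<lambda>x y. dreg (Some x) (Some y)))" for u v
  have conv: "\<sigma> \<in> VR t UNIV d\<theta> \<and> \<sigma> \<inter> C \<noteq> {} \<and> \<sigma> - C \<noteq> {}"
    if uv: "0 \<le> u" "0 \<le> v" "lp_norm2 p u v \<le> t" and s: "\<sigma> \<in> JJ u v" for \<sigma> u v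
  proof -
    obtain a b where ab: "\<sigma> = a \<union> b" "a \<in> VR t {x \<in> C. \<beta> x \<theta> \<le> u} \<beta>"
      "b \<in> VR t {y \<in> - C. dreg (Some y) None \<le> v} (\<lambda>x y. dreg (Some x) (Some y))"
      "a \<noteq> {}" "b \<noteq> {}"
      using s unfolding JJ_def join_def by blast
    have cr: "d\<theta> x y \<le> t" if "x \<in> a" "y \<in> b" for x y
    proof -
      have "x \<in> C" "y \<notin> C" "\<beta> x \<theta> \<le> u" "dreg (Some y) None \<le> v"
        using ab that unfolding VR_def by auto
      then have "d\<theta> x y \<le> lp_norm2 p u v"
        using d\<theta>_cross lp_mono[OF p] bpos dpos by simp
      then show ?thesis using uv by simp
    qed
    have "\<forall>x\<in>\<sigma>. \<forall>y\<in>\<sigma>. d\<theta> x y \<le> t"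
    proof (intro ballI)
      fix x y assume "x \<in> \<sigma>" "y \<in> \<sigma>"
      then consider "x \<in> a" "y \<in> a" | "x \<in> a" "y \<in> b" | "x \<in> b" "y \<in> a" | "x \<in> b" "y \<in> b"
        using ab by blast
      then show "d\<theta> x y \<le> t"
      proof cases
        case 1
        then have "x \<in> C" "y \<in> C" "\<beta> x y \<le> t" using ab unfolding VR_def by blast+
        then show ?thesis using d\<theta>_C by simp
      next
        case 2 then show ?thesis using cr by blast
      next
        case 3 then show ?thesis using cr dsym by metis
      next
        case 4
        then have "x \<notin> C" "y \<notin> C" "dreg (Some x) (Some y) \<le> t" using ab unfolding VR_def by blast+
        then show ?thesis using d\<theta>_Y by simp
      qed
    qed
    moreover have "a \<subseteq> C" "b \<subseteq> - C" using ab unfolding VR_def by auto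
    ultimately show ?thesis using ab unfolding VR_def by auto
  qed
  have fwd: "\<exists>u v. 0 \<le> u \<and> 0 \<le> v \<and> lp_norm2 p u v \<le> t \<and> \<sigma> \<in> JJ u v
       \<and> (\<forall>x\<in>\<sigma> \<inter> C. \<beta> x \<theta> \<le> u) \<and> (\<forall>y\<in>\<sigma> - C. dreg (Some y) None \<le> v)"
    if s: "\<sigma> \<in> VR t UNIV d\<theta>" "\<sigma> \<inter> C \<noteq> {}" "\<sigma> - C \<noteq> {}" for \<sigma>
  proof -
    have fin: "finite \<sigma>" and dd: "\<forall>x\<in>\<sigma>. \<forall>y\<in>\<sigma>. d\<theta> x y \<le> t" using s unfolding VR_def by auto
    define u where "u = Max ((\<lambda>x. \<beta> x \<theta>) ` (\<sigma> \<inter> C))"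
    define v where "v = Max ((\<lambda>y. dreg (Some y) None) ` (\<sigma> - C))"
    have uge: "\<forall>x\<in>\<sigma> \<inter> C. \<beta> x \<theta> \<le> u" unfolding u_def using fin by auto
    have vge: "\<forall>y\<in>\<sigma> - C. dreg (Some y) None \<le> v" unfolding v_def using fin by auto
    have "u \<in> (\<lambda>x. \<beta> x \<theta>) ` (\<sigma> \<inter> C)" unfolding u_def using fin s(2) by (intro Max_in) auto
    then obtain x0 where x0: "x0 \<in> \<sigma>" "x0 \<in> C" "u = \<beta> x0 \<theta>" by auto
    have "v \<in> (\<lambda>y. dreg (Some y) None) ` (\<sigma> - C)" unfolding v_def using fin s(3) by (intro Max_in) auto
    then obtain y0 where y0: "y0 \<in> \<sigma>" "y0 \<notin> C" "v = dreg (Some y0) None" by auto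
    have u0: "0 \<le> u" "0 \<le> v" using x0 y0 bpos dpos by auto
    have "d\<theta> x0 y0 \<le> t" using dd x0 y0 by blast
    then have lt: "lp_norm2 p u v \<le> t" using d\<theta>_cross[OF x0(2) y0(2)] x0(3) y0(3) by simp
    have "\<sigma> = (\<sigma> \<inter> C) \<union> (\<sigma> - C)" by blast
    moreover have "\<sigma> \<inter> C \<in> VR t {x \<in> C. \<beta> x \<theta> \<le> u} \<beta>"
      unfolding VR_def
    proof (intro CollectI conjI ballI)
      fix x y assume "x \<in> \<sigma> \<inter> C" "y \<in> \<sigma> \<inter> C"
      then show "\<beta> x y \<le> t" using dd d\<theta>_C[of x y] by (metis IntE)
    qed (use fin s(2) uge in auto)
    moreover have "\<sigma> - C \<in> VR t {y \<in> - C. dreg (Some y) None \<le> v} (\<lambda>x y. dreg (Some x) (Some y))"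
      unfolding VR_def
    proof (intro CollectI conjI ballI)
      fix x y assume "x \<in> \<sigma> - C" "y \<in> \<sigma> - C"
      then show "dreg (Some x) (Some y) \<le> t" using dd d\<theta>_Y[of x y] by (metis DiffE)
    qed (use fin s(3) vge in auto)
    ultimately have "\<sigma> \<in> JJ u v" unfolding JJ_def join_def using s by blast
    then show ?thesis using u0 lt uge vge by blast
  qed
  have part1: "{\<sigma> \<in> VR t UNIV d\<theta>. \<sigma> \<inter> C \<noteq> {} \<and> \<sigma> - C \<noteq> {}} =
     \<Union>{JJ u v | u v. 0 \<le> u \<and> 0 \<le> v \<and> lp_norm2 p u v \<le> t}"
  proof
    show "{\<sigma> \<in> VR t UNIV d\<theta>. \<sigma> \<inter> C \<noteq> {} \<and> \<sigma> - C \<noteq> {}} \<subseteq>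
     \<Union>{JJ u v | u v. 0 \<le> u \<and> 0 \<le> v \<and> lp_norm2 p u v \<le> t}"
    proof
      fix \<sigma> assume "\<sigma> \<in> {\<sigma> \<in> VR t UNIV d\<theta>. \<sigma> \<inter> C \<noteq> {} \<and> \<sigma> - C \<noteq> {}}"
      then obtain u v where "0 \<le> u \<and> 0 \<le> v \<and> lp_norm2 p u v \<le> t \<and> \<sigma> \<in> JJ u v"
        using fwd by blast
      then show "\<sigma> \<in> \<Union>{JJ u v | u v. 0 \<le> u \<and> 0 \<le> v \<and> lp_norm2 p u v \<le> t}" by blast
    qed
    show "\<Union>{JJ u v | u v. 0 \<le> u \<and> 0 \<le> v \<and> lp_norm2 p u v \<le> t} \<subseteq>
       {\<sigma> \<in> VR t UNIV d\<theta>. \<sigma> \<inter> C \<noteq> {} \<and> \<sigma> - C \<noteq> {}}"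
      using conv by blast
  qed
  have part2: "VR t UNIV d\<theta> =
             VR t C \<beta> \<union> VR t (- C) (\<lambda>x y. dreg (Some x) (Some y)) \<union> JJ t t" if pinf: "p = \<infinity>"
  proof
    have lpt: "lp_norm2 p t t = t" using pinf t by (simp add: lp_norm2_def)
    show "VR t C \<beta> \<union> VR t (- C) (\<lambda>x y. dreg (Some x) (Some y)) \<union> JJ t t \<subseteq> VR t UNIV d\<theta>"
    proof -
      have "VR t C \<beta> \<subseteq> VR t UNIV d\<theta>"
      proof
        fix \<sigma> assume h: "\<sigma> \<in> VR t C \<beta>"
        then have "\<sigma> \<subseteq> C" unfolding VR_def by blast
        then show "\<sigma> \<in> VR t UNIV d\<theta>" using d\<theta>_C by (intro VR_transfer[OF h]) blast+
      qed
      moreover have "VR t (- C) (\<lambda>x y. dreg (Some x) (Some y)) \<subseteq> VR t UNIV d\<theta>"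
      proof
        fix \<sigma> assume h: "\<sigma> \<in> VR t (- C) (\<lambda>x y. dreg (Some x) (Some y))"
        then have "\<sigma> \<subseteq> - C" unfolding VR_def by blast
        then show "\<sigma> \<in> VR t UNIV d\<theta>" using d\<theta>_Y by (intro VR_transfer[OF h]) blast+
      qed
      moreover have "JJ t t \<subseteq> VR t UNIV d\<theta>"
      proof
        fix \<sigma> assume "\<sigma> \<in> JJ t t"
        then show "\<sigma> \<in> VR t UNIV d\<theta>" using conv[of t t \<sigma>] t lpt by simp
      qed
      ultimately show ?thesis by blast
    qed
    show "VR t UNIV d\<theta> \<subseteq> VR t C \<beta> \<union> VR t (- C) (\<lambda>x y. dreg (Some x) (Some y)) \<union> JJ t t"
    proof
      fix \<sigma> assume s: "\<sigma> \<in> VR t UNIV d\<theta>"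
      show "\<sigma> \<in> VR t C \<beta> \<union> VR t (- C) (\<lambda>x y. dreg (Some x) (Some y)) \<union> JJ t t"
      proof (cases "\<sigma> \<inter> C \<noteq> {} \<and> \<sigma> - C \<noteq> {}")
        case True
        then obtain u v where uv: "0 \<le> u" "0 \<le> v" "lp_norm2 p u v \<le> t" "\<sigma> \<in> JJ u v"
          using fwd s by blast
        have "u \<le> t" "v \<le> t" using uv pinf by (auto simp: lp_norm2_def)
        then have "JJ u v \<subseteq> JJ t t" unfolding JJ_def
          by (intro join_mono VR_mono) auto
        then show ?thesis using uv by blast
      next
        case False
        then have "\<sigma> \<subseteq> C \<or> \<sigma> \<subseteq> - C" by blast
        then show ?thesis
        proof
          assume "\<sigma> \<subseteq> C"
          then have "\<sigma> \<in> VR t C \<beta>" using VR_sub[OF s, of C \<beta>] d\<theta>_C by blast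
          then show ?thesis by blast
        next
          assume "\<sigma> \<subseteq> - C"
          then have "\<sigma> \<in> VR t (- C) (\<lambda>x y. dreg (Some x) (Some y))"
            using VR_sub[OF s, of "- C" "\<lambda>x y. dreg (Some x) (Some y)"] d\<theta>_Y by simp
          then show ?thesis by blast
        qed
      qed
    qed
  qed
  show ?thesis
    apply (intro conjI impI)
    subgoal by (rule part1[unfolded JJ_def])
    subgoal by (rule part2[unfolded JJ_def])
    done
qed

end
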